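(* Let $n$ and $0<n_1<\cdots<n_d<n$ be integers with $m_1=n_1$, $m_k=n_k-n_{k-1}$ ($2\le k\le d$), $m_{d+1}=n-n_d$, and regard $\mathrm{Flag}(n_1,\dots,n_d;n)=\{(VJ_1V^{\mathsf T},\dots,VJ_dV^{\mathsf T}):V\in\mathrm{O}(n)\}$ as a submanifold of $(\mathbb{R}^{n\times n})^d$ with the Frobenius inner product. Let $V(t)$ be a differentiable curve in $\mathrm{O}(n)$ with $\Lambda(t)=V(t)^{\mathsf T}\dot V(t)$ satisfying $\Lambda(k,k)\equiv0$ ($k=1,\dots,d+1$), $c(t)=V(t)(J_1,\dots,J_d)V(t)^{\mathsf T}$, and let $X(t)\in\mathfrak{so}(n)$ be differentiable with $X(k,k)\equiv0$ ($k=1,\dots,d+1$). Let \[ T_2(t)=V(t)\big(\Lambda XJ_1+J_1X\Lambda,\dots,\Lambda XJ_d+J_dX\Lambda\big)V(t)^{\mathsf T}. \] Then the orthogonal projection of $T_2(t)$ onto $\mathbb{T}_{c(t)}\mathrm{Flag}(n_1,\dots,n_d;n)$ equals $V(t)(W_1(t),\dots,W_d(t))V(t)^{\mathsf T}$, where $W_1,\dots,W_d$ are symmetric with blocks \[ W_k(p,q)=\begin{cases}\sum_{s=1}^{d+1}X(k,s)\Lambda(s,q)-\sum_{s=1}^{d+1}\Lambda(s,k)^{\mathsf T}X(q,s)^{\mathsf T}, & p=k,\ q\neq k,\\[2pt] \sum_{s=1}^{d+1}\Lambda(s,p)^{\mathsf T}X(k,s)^{\mathsf T}-\sum_{s=1}^{d+1}X(p,s)\Lambda(s,k),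 & q=k,\ p\neq k,\\[2pt] 0, & \text{otherwise}.\end{cases} \]
   Context: $J_k=\operatorname{diag}(-I_{m_1},\dots,-I_{m_{k-1}},I_{m_k},-I_{m_{k+1}},\dots,-I_{m_{d+1}})$. $V(X_1,\dots,X_d)V^{\mathsf T}$ denotes $(VX_1V^{\mathsf T},\dots,VX_dV^{\mathsf T})$. For an $n\times n$ matrix $M$, $M(p,q)$ denotes its $(p,q)$ block in the partition $n=m_1+\cdots+m_{d+1}$. *)

theory Defs
  imports "HOL-Analysis.Analysis"
begin

text \<open>Matrices are n x n real matrices indexed by a finite linearly ordered type 'n,
  n = CARD('n).
  The partition n = m_1 + ... + m_{d+1} is given by 0 < ns 1 < ... < ns d < n.
  Block numbers run over {1..d+1}. Tuples in (R^{n x n})^d are functions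
  nat => matrix, with components 1..d and value 0 elsewhere.\<close>

definition pos :: "('n::{finite,linorder}) \<Rightarrow> nat" where
  "pos i = card {j. j < i}"

definition blk :: "nat \<Rightarrow> (nat \<Rightarrow> nat) \<Rightarrow> ('n::{finite,linorder}) \<Rightarrow> nat" where
  "blk d ns i = card {k \<in> {1..d}. ns k \<le> pos i} + 1"

definition blockpart :: "nat \<Rightarrow> (nat \<Rightarrow> nat) \<Rightarrow> real^('n::{finite,linorder})^('n::{finite,linorder}) \<Rightarrow> nat \<Rightarrow> nat \<Rightarrow> real^('n::{finite,linorder})^('n::{finite,linorder})" where
  "blockpart d ns M p q = (\<chi> i j. if blk d ns i = p \<and> blk d ns j = q then M $ i $ j else 0)"

definition Jmat :: "nat \<Rightarrow> (nat \<Rightarrow> nat) \<Rightarrow> nat \<Rightarrow> real^('n::{finite,linorder})^'n::{finite,linorder}" where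
  "Jmat d ns k = (\<chi> i j. if i = j then (if blk d ns i = k then 1 else -1) else 0)"

definition flag :: "nat \<Rightarrow> (nat \<Rightarrow> nat) \<Rightarrow> (nat \<Rightarrow> real^('n::{finite,linorder})^'n::{finite,linorder}) set" where
  "flag d ns = {c. \<exists>V. orthogonal_matrix V \<and>
      c = (\<lambda>k. if k \<in> {1..d} then V ** Jmat d ns k ** transpose V else 0)}"

definition tangent_space :: "(nat \<Rightarrow> real^('n::{finite,linorder})^('n::{finite,linorder})) set \<Rightarrow> (nat \<Rightarrow> real^('n::{finite,linorder})^('n::{finite,linorder})) \<Rightarrow> (nat \<Rightarrow> real^('n::{finite,linorder})^('n::{finite,linorder})) set" where
  "tangent_space S c = {T. \<exists>\<gamma>::real \<Rightarrow> nat \<Rightarrow> real^('n::{finite,linorder})^('n::{finite,linorder}). (\<forall>t. \<gamma> t \<in> S) \<and> \<gamma> 0 = c \<and>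
      (\<forall>k. ((\<lambda>t. \<gamma> t k) has_vector_derivative T k) (at 0))}"

definition tinner :: "nat \<Rightarrow> (nat \<Rightarrow> real^('n::{finite,linorder})^('n::{finite,linorder})) \<Rightarrow> (nat \<Rightarrow> real^('n::{finite,linorder})^('n::{finite,linorder})) \<Rightarrow> real" where
  "tinner d A B = (\<Sum>k\<in>{1..d}. inner (A k) (B k))"

definition orth_proj :: "nat \<Rightarrow> (nat \<Rightarrow> real^('n::{finite,linorder})^('n::{finite,linorder})) set \<Rightarrow> (nat \<Rightarrow> real^('n::{finite,linorder})^('n::{finite,linorder})) \<Rightarrow> (nat \<Rightarrow> real^('n::{finite,linorder})^('n::{finite,linorder}))" where
  "orth_proj d S x = (THE p. p \<in> S \<and> (\<forall>s\<in>S. tinner d (\<lambda>k. x k - p k) s = 0))"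

definition Wmat :: "nat \<Rightarrow> (nat \<Rightarrow> nat) \<Rightarrow> real^('n::{finite,linorder})^('n::{finite,linorder}) \<Rightarrow> real^('n::{finite,linorder})^('n::{finite,linorder}) \<Rightarrow> nat \<Rightarrow> real^('n::{finite,linorder})^('n::{finite,linorder})" where
  "Wmat d ns X L k =
     (\<Sum>q\<in>{1..d+1}-{k}. \<Sum>s\<in>{1..d+1}.
        blockpart d ns X k s ** blockpart d ns L s q
        - transpose (blockpart d ns L s k) ** transpose (blockpart d ns X q s))
   + (\<Sum>p\<in>{1..d+1}-{k}. \<Sum>s\<in>{1..d+1}.
        transpose (blockpart d ns L s p) ** transpose (blockpart d ns X k s)
        - blockpart d ns X p s ** blockpart d ns L s k)"

end

theory Submission
  imports Defs
begin


lemma mm_rdistrib: "((A::real^'n^'m) + B) ** (C::real^'k^'n) = A ** C + B ** C"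
  by (vector matrix_matrix_mult_def sum.distrib[symmetric] field_simps)
lemma mm_ldiff: "(A::real^'n^'m) ** ((B::real^'k^'n) - C) = A ** B - A ** C"
  by (vector matrix_matrix_mult_def sum_subtractf[symmetric] field_simps)
lemma mm_rdiff: "((A::real^'n^'m) - B) ** (C::real^'k^'n) = A ** C - B ** C"
  by (vector matrix_matrix_mult_def sum_subtractf[symmetric] field_simps)
lemma mm_lneg: "(- (A::real^'n^'m)) ** (C::real^'k^'n) = - (A ** C)"
  by (vector matrix_matrix_mult_def sum_negf[symmetric])
lemma mm_rneg: "(A::real^'n^'m) ** (- (C::real^'k^'n)) = - (A ** C)"
  by (vector matrix_matrix_mult_def sum_negf[symmetric])
lemma tr_add: "transpose ((A::real^'n^'m) + B) = transpose A + transpose B"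
  by (vector transpose_def)
lemma tr_diff: "transpose ((A::real^'n^'m) - B) = transpose A - transpose B"
  by (vector transpose_def)
lemma tr_neg: "transpose (- (A::real^'n^'m)) = - transpose A"
  by (vector transpose_def)

lemmas malg = matrix_add_ldistrib mm_rdistrib mm_ldiff mm_rdiff mm_lneg mm_rneg
  matrix_mul_assoc tr_add tr_diff tr_neg matrix_transpose_mul transpose_scalar
  scalar_matrix_assoc[symmetric] matrix_scalar_ac

lemma mm_bilinear: "bilinear (\<lambda>(A::real^'n^'m) (B::real^'k^'n). A ** B)"
  unfolding bilinear_def
  by (auto intro!: linearI simp: matrix_add_ldistrib mm_rdistrib matrix_scalar_ac scalar_matrix_assoc)

lemma mm_bb: "bounded_bilinear (\<lambda>(A::real^'n^'m) (B::real^'k^'n). A ** B)"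
  using mm_bilinear bilinear_conv_bounded_bilinear by blast

lemma tr_bl: "bounded_linear (transpose :: real^'n^'m \<Rightarrow> real^'m^'n)"
  by (rule linear_conv_bounded_linear[THEN iffD1]) (auto intro!: linearI simp: tr_add transpose_scalar)

lemma inner_mat: "inner (A::real^'n^'m) B = (\<Sum>i\<in>UNIV. \<Sum>j\<in>UNIV. A$i$j * B$i$j)"
  by (simp add: inner_vec_def)

lemma inner_tr: "inner (transpose (A::real^'n^'m)) (transpose B) = inner A B"
  unfolding inner_mat transpose_def
  apply simp
  apply (rule sum.swap)
  done

lemma inner_mm_right: "inner ((A::real^'n^'m) ** (B::real^'k^'n)) C = inner A (C ** transpose B)"
  unfolding inner_mat matrix_matrix_mult_def transpose_def
  apply (simp add: sum_distrib_left sum_distrib_right mult_ac)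
  apply (rule sum.cong[OF refl])
  apply (rule sum.swap)
  done

lemma inner_mm_left: "inner ((A::real^'n^'m) ** (B::real^'k^'n)) C = inner B (transpose A ** C)"
proof -
  have "inner (A ** B) C = inner (transpose B ** transpose A) (transpose C)"
    by (metis inner_tr matrix_transpose_mul)
  also have "\<dots> = inner (transpose B) (transpose C ** A)" by (simp add: inner_mm_right)
  also have "\<dots> = inner B (transpose A ** C)" by (metis inner_tr matrix_transpose_mul transpose_transpose)
  finally show ?thesis .
qed



lemma inner_anticomm:
  fixes E A C :: "real^'n^'n"
  assumes "E ** C = C ** E" "C ** A = - (A ** C)" "C ** C = mat 1" "transpose C = C"
  shows "inner E A = 0"
proof -
  have "inner E A = inner E (A ** C ** C)" using assms(3) by (simp add: matrix_mul_assoc[symmetric])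
  also have "\<dots> = inner (E ** C) (A ** C)" using assms(4) by (simp add: inner_mm_right)
  also have "\<dots> = inner (C ** E) (- (C ** A))" using assms(1,2) by simp
  also have "\<dots> = - inner E (C ** C ** A)" using assms(4) by (simp add: inner_mm_left matrix_mul_assoc)
  also have "\<dots> = - inner E A" using assms(3) by simp
  finally show ?thesis by simp
qed

lemma blk_range: "blk d ns (i::'n::{finite,linorder}) \<in> {1..d+1}"
proof -
  have "card {k \<in> {1..d}. ns k \<le> pos i} \<le> card {1..d}" by (rule card_mono) auto
  then show ?thesis unfolding blk_def by simp
qed

lemma bp_entry: "blockpart d ns M p q $ i $ j = (if blk d ns i = p \<and> blk d ns j = q then M$i$j else 0)"
  by (simp add: blockpart_def)

lemma bp_prod_sum:
  fixes A B :: "real^('n::{finite,linorder})^('n::{finite,linorder})"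
  shows "(\<Sum>s\<in>{1..d+1}. blockpart d ns A p s ** blockpart d ns B s q) = blockpart d ns (A ** B) p q"
proof -
  have "(\<Sum>s\<in>{1..d+1}. (\<Sum>(l::'n)\<in>UNIV. (if blk d ns i = p \<and> blk d ns l = s then A$i$l else 0) *
           (if blk d ns l = s \<and> blk d ns j = q then B$l$j else 0)))
      = (if blk d ns i = p \<and> blk d ns j = q then (\<Sum>(l::'n)\<in>UNIV. A$i$l * B$l$j) else 0)" for i j
  proof -
    have "(\<Sum>s\<in>{1..d+1}. (\<Sum>(l::'n)\<in>UNIV. (if blk d ns i = p \<and> blk d ns l = s then A$i$l else 0) *
           (if blk d ns l = s \<and> blk d ns j = q then B$l$j else 0)))
       = (\<Sum>(l::'n)\<in>UNIV. \<Sum>s\<in>{1..d+1}. (if blk d ns i = p \<and> blk d ns l = s then A$i$l else 0) *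
           (if blk d ns l = s \<and> blk d ns j = q then B$l$j else 0))"
      by (rule sum.swap)
    also have "\<dots> = (\<Sum>(l::'n)\<in>UNIV. if blk d ns i = p \<and> blk d ns j = q then A$i$l * B$l$j else 0)"
    proof (rule sum.cong[OF refl])
      fix l :: 'n
      have r: "blk d ns l \<in> {1..d+1}" by (rule blk_range)
      have "(\<Sum>s\<in>{1..d+1}. (if blk d ns i = p \<and> blk d ns l = s then A$i$l else 0) *
           (if blk d ns l = s \<and> blk d ns j = q then B$l$j else 0))
          = (\<Sum>s\<in>{1..d+1}. if s = blk d ns l then (if blk d ns i = p \<and> blk d ns j = q then A$i$l * B$l$j else 0) else 0)"
        by (rule sum.cong) auto
      also have "\<dots> = (if blk d ns i = p \<and> blk d ns j = q then A$i$l * B$l$j else 0)"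
        using r by (subst sum.delta) auto
      finally show "(\<Sum>s\<in>{1..d+1}. (if blk d ns i = p \<and> blk d ns l = s then A$i$l else 0) *
           (if blk d ns l = s \<and> blk d ns j = q then B$l$j else 0)) = (if blk d ns i = p \<and> blk d ns j = q then A$i$l * B$l$j else 0)" .
    qed
    also have "\<dots> = (if blk d ns i = p \<and> blk d ns j = q then (\<Sum>(l::'n)\<in>UNIV. A$i$l * B$l$j) else 0)"
      by (cases "blk d ns i = p \<and> blk d ns j = q") auto
    finally show ?thesis .
  qed
  then show ?thesis
    by (simp add: vec_eq_iff matrix_matrix_mult_def blockpart_def)
qed

lemma transpose_bp: "transpose (blockpart d ns A p q) = blockpart d ns (transpose A) q p"
  by (simp add: vec_eq_iff transpose_def blockpart_def)

lemma bp_diff: "blockpart d ns (A - B) p q = blockpart d ns A p q - blockpart d ns B p q"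
  by (simp add: vec_eq_iff blockpart_def)

lemma bp_sum_q: "(\<Sum>q\<in>{1..d+1}-{k}. blockpart d ns A k q) $ i $ j
   = (if blk d ns i = k \<and> blk d ns j \<noteq> k then A$i$j else 0)"
proof -
  have r: "blk d ns j \<in> {1..d+1}" by (rule blk_range)
  have "(\<Sum>q\<in>{1..d+1}-{k}. blockpart d ns A k q) $ i $ j
     = (\<Sum>q\<in>{1..d+1}-{k}. if q = blk d ns j then (if blk d ns i = k then A$i$j else 0) else 0)"
    by (auto simp: blockpart_def intro!: sum.cong)
  also have "\<dots> = (if blk d ns i = k \<and> blk d ns j \<noteq> k then A$i$j else 0)"
    using r by (subst sum.delta) auto
  finally show ?thesis .
qed

lemma bp_sum_p: "(\<Sum>p\<in>{1..d+1}-{k}. blockpart d ns A p k) $ i $ j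
   = (if blk d ns i \<noteq> k \<and> blk d ns j = k then A$i$j else 0)"
proof -
  have r: "blk d ns i \<in> {1..d+1}" by (rule blk_range)
  have "(\<Sum>p\<in>{1..d+1}-{k}. blockpart d ns A p k) $ i $ j
     = (\<Sum>p\<in>{1..d+1}-{k}. if p = blk d ns i then (if blk d ns j = k then A$i$j else 0) else 0)"
    by (auto simp: blockpart_def intro!: sum.cong)
  also have "\<dots> = (if blk d ns i \<noteq> k \<and> blk d ns j = k then A$i$j else 0)"
    using r by (subst sum.delta) auto
  finally show ?thesis .
qed

lemma Wmat_entry:
  fixes X L :: "real^('n::{finite,linorder})^('n::{finite,linorder})"
  assumes "transpose X = - X" "transpose L = - L"
  shows "Wmat d ns X L k $ i $ j =
     (if blk d ns i = k \<and> blk d ns j \<noteq> k then (X ** L - L ** X)$i$j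
      else if blk d ns i \<noteq> k \<and> blk d ns j = k then - (X ** L - L ** X)$i$j else 0)"
proof -
  have tLX: "transpose L ** transpose X = L ** X" using assms by (simp add: mm_lneg mm_rneg)
  have e1: "(\<Sum>s\<in>{1..d+1}. blockpart d ns X k s ** blockpart d ns L s q
        - transpose (blockpart d ns L s k) ** transpose (blockpart d ns X q s))
       = blockpart d ns (X ** L - L ** X) k q" for q
    by (simp only: sum_subtractf transpose_bp bp_prod_sum bp_diff tLX)
  have e2: "(\<Sum>s\<in>{1..d+1}. transpose (blockpart d ns L s p) ** transpose (blockpart d ns X k s)
        - blockpart d ns X p s ** blockpart d ns L s k)
       = blockpart d ns (L ** X - X ** L) p k" for p
    by (simp only: sum_subtractf transpose_bp bp_prod_sum bp_diff tLX)
  show ?thesis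
    unfolding Wmat_def e1 e2 vector_add_component bp_sum_q bp_sum_p by auto
qed

lemma J_left: "(Jmat d ns k ** A) $ i $ j = (if blk d ns i = k then 1 else -1) * A $ i $ j"
proof -
  have "(Jmat d ns k ** A) $ i $ j = (\<Sum>l\<in>UNIV. if l = i then (if blk d ns i = k then 1 else -1) * A$i$j else 0)"
    unfolding matrix_matrix_mult_def Jmat_def vec_lambda_beta by (rule sum.cong) auto
  then show ?thesis by simp
qed
lemma J_right: "(A ** Jmat d ns k) $ i $ j = A $ i $ j * (if blk d ns j = k then 1 else -1)"
proof -
  have "(A ** Jmat d ns k) $ i $ j = (\<Sum>l\<in>UNIV. if l = j then A$i$j * (if blk d ns j = k then 1 else -1) else 0)"
    unfolding matrix_matrix_mult_def Jmat_def vec_lambda_beta by (rule sum.cong) auto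
  then show ?thesis by simp
qed
lemma J_sq: "Jmat d ns k ** Jmat d ns k = mat 1"
  by (simp add: vec_eq_iff J_left) (simp add: Jmat_def mat_def)
lemma J_tr: "transpose (Jmat d ns k) = Jmat d ns k"
  by (simp add: vec_eq_iff transpose_def Jmat_def)

lemma Wmat_alg:
  fixes X L :: "real^('n::{finite,linorder})^('n::{finite,linorder})"
  assumes "transpose X = - X" "transpose L = - L"
  shows "Wmat d ns X L k = (1/2) *\<^sub>R (Jmat d ns k ** (X ** L - L ** X) - (X ** L - L ** X) ** Jmat d ns k)"
proof -
  have "Wmat d ns X L k $ i $ j = ((1/2) *\<^sub>R (Jmat d ns k ** (X ** L - L ** X) - (X ** L - L ** X) ** Jmat d ns k)) $ i $ j" for i j
    unfolding Wmat_entry[OF assms] vector_scaleR_component vector_minus_component J_left J_right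
    by (auto simp: algebra_simps)
  then show ?thesis by (simp add: vec_eq_iff)
qed



lemma orth_both: "orthogonal_matrix (U::real^'n^'n) \<Longrightarrow> transpose U ** U = mat 1 \<and> U ** transpose U = mat 1"
  by (simp add: orthogonal_matrix_def)

lemma flag_sq:
  assumes "F \<in> flag d ns" "k \<in> {1..d}"
  shows "F k ** F k = mat 1"
proof -
  obtain U where U: "orthogonal_matrix U" "F = (\<lambda>k. if k \<in> {1..d} then U ** Jmat d ns k ** transpose U else 0)"
    using assms(1) unfolding flag_def by blast
  have "F k ** F k = U ** Jmat d ns k ** (transpose U ** U) ** Jmat d ns k ** transpose U"
    using assms(2) U(2) by (simp add: matrix_mul_assoc)
  also have "\<dots> = U ** (Jmat d ns k ** Jmat d ns k) ** transpose U"
    using orth_both[OF U(1)] by (simp add: matrix_mul_assoc)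
  also have "\<dots> = mat 1" using orth_both[OF U(1)] by (simp add: J_sq)
  finally show ?thesis .
qed

lemma flag_out: "F \<in> flag d ns \<Longrightarrow> k \<notin> {1..d} \<Longrightarrow> F k = 0"
  unfolding flag_def by auto

lemma tangent_zero:
  assumes "T \<in> tangent_space (flag d ns) c" "k \<notin> {1..d}"
  shows "T k = 0"
proof -
  obtain \<gamma> where g: "\<forall>t. \<gamma> t \<in> flag d ns" "\<forall>k. ((\<lambda>t. \<gamma> t k) has_vector_derivative T k) (at 0)"
    using assms(1) unfolding tangent_space_def by blast
  have "(\<lambda>t. \<gamma> t k) = (\<lambda>t. 0)" by (intro ext) (rule flag_out[OF g(1)[rule_format] assms(2)])
  then have "((\<lambda>t. \<gamma> t k) has_vector_derivative 0) (at 0)" by simp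
  then show ?thesis using g(2) vector_derivative_unique_at by blast
qed

lemma tangent_anti:
  assumes "T \<in> tangent_space (flag d ns) c" "k \<in> {1..d}"
  shows "c k ** T k = - (T k ** c k)"
proof -
  obtain \<gamma> where g: "\<forall>t. \<gamma> t \<in> flag d ns" "\<gamma> 0 = c" "\<forall>k. ((\<lambda>t. \<gamma> t k) has_vector_derivative T k) (at 0)"
    using assms(1) unfolding tangent_space_def by blast
  have "((\<lambda>t. \<gamma> t k ** \<gamma> t k) has_vector_derivative (\<gamma> 0 k ** T k + T k ** \<gamma> 0 k)) (at 0)"
    by (rule bounded_bilinear.has_vector_derivative[OF mm_bb g(3)[rule_format] g(3)[rule_format]])
  moreover have "(\<lambda>t. \<gamma> t k ** \<gamma> t k) = (\<lambda>t. mat 1)" by (intro ext) (rule flag_sq[OF g(1)[rule_format] assms(2)])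
  ultimately have "((\<lambda>t. mat 1) has_vector_derivative (c k ** T k + T k ** c k)) (at 0)" using g(2) by simp
  then have "c k ** T k + T k ** c k = 0" using vector_derivative_unique_at by (metis has_vector_derivative_const)
  then show ?thesis by (simp add: eq_neg_iff_add_eq_0)
qed

lemma tinner_diff: "tinner d (\<lambda>k. f k - g k) h = tinner d f h - tinner d g h"
  by (simp add: tinner_def inner_diff_left sum_subtractf)
lemma tinner_diff_r: "tinner d f (\<lambda>k. g k - h k) = tinner d f g - tinner d f h"
  by (simp add: tinner_def inner_diff_right sum_subtractf)
lemma tinner_sym: "tinner d f g = tinner d g f"
  by (simp add: tinner_def inner_commute)

lemma orth_unique:
  assumes P: "P \<in> S" "\<forall>s\<in>S. tinner d (\<lambda>k. x k - P k) s = 0"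
    and Z: "\<forall>T\<in>S. \<forall>k. k \<notin> {1..d} \<longrightarrow> T k = 0"
  shows "orth_proj d S x = P"
  unfolding orth_proj_def
proof (rule the_equality)
  show "P \<in> S \<and> (\<forall>s\<in>S. tinner d (\<lambda>k. x k - P k) s = 0)" using P by blast
next
  fix p assume p: "p \<in> S \<and> (\<forall>s\<in>S. tinner d (\<lambda>k. x k - p k) s = 0)"
  have e1: "tinner d x p = tinner d P p" using P(2) p by (metis tinner_diff eq_iff_diff_eq_0)
  have e2: "tinner d x P = tinner d p P" using P(1) p by (metis tinner_diff eq_iff_diff_eq_0)
  have e3: "tinner d x P = tinner d P P" using P by (metis tinner_diff eq_iff_diff_eq_0)
  have e4: "tinner d x p = tinner d p p" using p by (metis tinner_diff eq_iff_diff_eq_0)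
  have "tinner d (\<lambda>k. P k - p k) (\<lambda>k. P k - p k) = tinner d P P - tinner d P p - (tinner d p P - tinner d p p)"
    by (simp add: tinner_diff tinner_diff_r)
  also have "\<dots> = 0" using e1 e2 e3 e4 tinner_sym[of d p P] by simp
  finally have "tinner d (\<lambda>k. P k - p k) (\<lambda>k. P k - p k) = 0" .
  then have "(\<Sum>k\<in>{1..d}. norm (P k - p k)^2) = 0"
    by (simp add: tinner_def power2_norm_eq_inner)
  then have "\<forall>k\<in>{1..d}. norm (P k - p k)^2 = 0"
    by (subst (asm) sum_nonneg_eq_0_iff) auto
  moreover have "\<forall>k. k \<notin> {1..d} \<longrightarrow> P k = p k"
  proof (intro allI impI)
    fix k :: nat assume k: "k \<notin> {1..d}"
    have "P k = 0" using Z P(1) k by blast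
    moreover have "p k = 0" using Z p k by blast
    ultimately show "P k = p k" by simp
  qed
  ultimately have "\<forall>k. P k = p k" by auto
  then show "p = P" by (simp add: fun_eq_iff)
qed



lemma skew_quad: 
  fixes A :: "real^'n^'n" assumes "transpose A = - A"
  shows "x \<bullet> (A *v x) = 0"
proof -
  have a: "A$i$j = - A$j$i" for i j
  proof -
    have "transpose A $ j $ i = (- A) $ j $ i" using assms by simp
    then show ?thesis by (simp add: transpose_def)
  qed
  have e: "x \<bullet> (A *v x) = (\<Sum>i\<in>UNIV. \<Sum>j\<in>UNIV. x$i * A$i$j * x$j)"
    by (simp add: inner_vec_def matrix_vector_mult_def sum_distrib_left mult_ac)
  have "(\<Sum>i\<in>UNIV. \<Sum>j\<in>UNIV. x$i * A$i$j * x$j) = (\<Sum>j\<in>UNIV. \<Sum>i\<in>UNIV. x$i * A$i$j * x$j)" by (rule sum.swap)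
  also have "\<dots> = (\<Sum>j\<in>UNIV. \<Sum>i\<in>UNIV. - (x$j * A$j$i * x$i))"
    by (intro sum.cong refl) (subst a, simp add: mult_ac)
  also have "\<dots> = - (\<Sum>j\<in>UNIV. \<Sum>i\<in>UNIV. x$j * A$j$i * x$i)"
    by (simp add: sum_negf)
  finally have "(\<Sum>i\<in>UNIV. \<Sum>j\<in>UNIV. x$i * A$i$j * x$j) = 0" by simp
  then show ?thesis using e by simp
qed

lemma inv_exists:
  fixes A :: "real^'n^'n" assumes "transpose A = - A"
  shows "\<exists>N. (mat 1 - s *\<^sub>R A) ** N = mat 1"
proof -
  have "\<forall>x. (mat 1 - s *\<^sub>R A) *v x = 0 \<longrightarrow> x = 0"
  proof (intro allI impI)
    fix x assume h: "(mat 1 - s *\<^sub>R A) *v x = 0"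
    have "(mat 1 - s *\<^sub>R A) *v x = x - s *\<^sub>R (A *v x)"
      by (simp add: matrix_vector_mult_diff_rdistrib scaleR_matrix_vector_assoc)
    with h have "x = s *\<^sub>R (A *v x)" by simp
    then have "x \<bullet> x = s * (x \<bullet> (A *v x))" by (metis inner_scaleR_right)
    then have "x \<bullet> x = 0" using skew_quad[OF assms] by simp
    then show "x = 0" by simp
  qed
  then obtain B where "B ** (mat 1 - s *\<^sub>R A) = mat 1" using matrix_left_invertible_ker by blast
  then show ?thesis using matrix_left_right_inverse by blast
qed

lemma norm_orth: "orthogonal_matrix (R::real^'n^'n) \<Longrightarrow> norm R = norm (mat 1 :: real^'n^'n)"
proof -
  assume o: "orthogonal_matrix R"
  have "inner R R = inner (R ** mat 1) R" by simp
  also have "\<dots> = inner (mat 1 :: real^'n^'n) (mat 1)" 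
    unfolding inner_mm_left using orth_both[OF o] by simp
  finally show ?thesis by (simp add: norm_eq_sqrt_inner)
qed

lemma cayley:
  fixes A :: "real^'n^'n" assumes skew: "transpose A = - A"
  shows "\<exists>R. (\<forall>s. orthogonal_matrix (R s)) \<and> R 0 = mat 1 \<and> (R has_vector_derivative A) (at 0)"
proof -
  define B where "B = (1/2) *\<^sub>R A"
  have skB: "transpose B = - B" using skew by (simp add: B_def transpose_scalar)
  define N where "N s = (SOME N. (mat 1 - s *\<^sub>R B) ** N = mat 1)" for s
  have PN: "(mat 1 - s *\<^sub>R B) ** N s = mat 1" for s
    unfolding N_def using someI_ex[OF inv_exists[OF skB]] by blast
  have NP: "N s ** (mat 1 - s *\<^sub>R B) = mat 1" for s using PN matrix_left_right_inverse by blast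
  define R where "R s = (mat 1 + s *\<^sub>R B) ** N s" for s
  have orth: "orthogonal_matrix (R s)" for s
  proof -
    let ?P = "mat 1 - s *\<^sub>R B" and ?Q = "mat 1 + s *\<^sub>R B"
    have tQ: "transpose ?Q = ?P" using skB by (simp add: tr_add transpose_scalar)
    have PQ: "?P ** ?Q = ?Q ** ?P" by (simp add: malg algebra_simps)
    have "transpose (R s) ** R s = transpose (N s) ** (?P ** ?Q) ** N s"
      by (simp add: R_def matrix_transpose_mul tQ matrix_mul_assoc)
    also have "\<dots> = transpose (N s) ** (?Q ** ?P) ** N s" by (simp only: PQ)
    also have "\<dots> = transpose (N s) ** ?Q ** (?P ** N s)" 
      by (simp add: matrix_mul_assoc)
    also have "\<dots> = transpose (N s) ** ?Q" using PN by simp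
    also have "\<dots> = transpose (transpose ?Q ** N s)" by (simp add: matrix_transpose_mul)
    also have "\<dots> = mat 1" using PN tQ by simp
    finally show ?thesis by (simp add: orthogonal_matrix)
  qed
  have R0: "R 0 = mat 1" using PN[of 0] by (simp add: R_def)
  have Req: "R s - mat 1 = s *\<^sub>R (B ** (R s + mat 1))" for s
  proof -
    have q: "(mat 1 + s *\<^sub>R B) - (mat 1 - s *\<^sub>R B) = (s + s) *\<^sub>R B" by (simp add: vec_eq_iff algebra_simps)
    have "R s - mat 1 = (mat 1 + s *\<^sub>R B) ** N s - (mat 1 - s *\<^sub>R B) ** N s"
      using PN by (simp add: R_def)
    also have "\<dots> = ((s + s) *\<^sub>R B) ** N s" by (simp only: mm_rdiff[symmetric] q)
    finally have a: "R s - mat 1 = (s + s) *\<^sub>R (B ** N s)" by (simp only: scalar_matrix_assoc)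
    have q2: "(mat 1 + s *\<^sub>R B) + (mat 1 - s *\<^sub>R B) = mat 1 + mat 1" by simp
    have "R s + mat 1 = (mat 1 + s *\<^sub>R B) ** N s + (mat 1 - s *\<^sub>R B) ** N s"
      using PN by (simp add: R_def)
    also have "\<dots> = (mat 1 + mat 1) ** N s" by (simp only: mm_rdistrib[symmetric] q2)
    finally have b: "R s + mat 1 = N s + N s" by (simp only: mm_rdistrib matrix_mul_lid)
    have "s *\<^sub>R (B ** (R s + mat 1)) = s *\<^sub>R (B ** N s + B ** N s)" by (simp only: b matrix_add_ldistrib)
    also have "\<dots> = (s + s) *\<^sub>R (B ** N s)" by (simp only: scaleR_right_distrib scaleR_left_distrib)
    finally have c: "s *\<^sub>R (B ** (R s + mat 1)) = (s + s) *\<^sub>R (B ** N s)" .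
    show ?thesis using a c by metis
  qed
  obtain K where K: "\<forall>a b. norm ((a::real^'n^'n) ** (b::real^'n^'n)) \<le> norm a * norm b * K" and K0: "K > 0"
    using bounded_bilinear.pos_bounded[OF mm_bb] by blast
  define c where "c = norm (mat 1 :: real^'n^'n)"
  have nR: "norm (R s) = c" for s using norm_orth[OF orth] c_def by simp
  have bnd: "norm (R s - mat 1) \<le> \<bar>s\<bar> * (norm B * (2*c) * K)" for s
  proof -
    have "norm (R s - mat 1) = \<bar>s\<bar> * norm (B ** (R s + mat 1))" using Req by simp
    also have "\<dots> \<le> \<bar>s\<bar> * (norm B * norm (R s + mat 1) * K)" using K by (simp add: mult_left_mono)
    also have "\<dots> \<le> \<bar>s\<bar> * (norm B * (2*c) * K)"
    proof -
      have "norm (R s + mat 1) \<le> 2*c" using norm_triangle_ineq[of "R s" "mat 1"] nR c_def by simp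
      then show ?thesis using K0 by (intro mult_left_mono mult_right_mono) auto
    qed
    finally show ?thesis .
  qed
  have lim: "((\<lambda>s. R s - mat 1) \<longlongrightarrow> 0) (at 0)"
  proof (rule Lim_null_comparison)
    show "\<forall>\<^sub>F s in at 0. norm (R s - mat 1) \<le> \<bar>s\<bar> * (norm B * (2*c) * K)" using bnd by simp
    show "((\<lambda>s::real. \<bar>s\<bar> * (norm B * (2*c) * K)) \<longlongrightarrow> 0) (at 0)"
      by (auto intro!: tendsto_eq_intros)
  qed
  have deriv: "(R has_vector_derivative A) (at 0)"
    unfolding has_vector_derivative_def has_derivative_at
  proof
    show "bounded_linear (\<lambda>h. h *\<^sub>R A)" by (rule bounded_linear_scaleR_left)
    have eq: "norm (R (0 + h) - R 0 - h *\<^sub>R A) / norm h = norm (B ** (R h - mat 1))" if "h \<noteq> 0" for h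
    proof -
      have AB: "A = B + B" unfolding B_def by (simp add: scaleR_left_distrib[symmetric])
      have e1: "B ** (R h - mat 1) = B ** (R h + mat 1) - A"
        by (simp add: matrix_add_ldistrib mm_ldiff AB algebra_simps)
      have "R h - mat 1 - h *\<^sub>R A = h *\<^sub>R (B ** (R h + mat 1)) - h *\<^sub>R A" using Req[of h] by simp
      also have "\<dots> = h *\<^sub>R (B ** (R h + mat 1) - A)" by (simp only: scaleR_right_diff_distrib)
      also have "\<dots> = h *\<^sub>R (B ** (R h - mat 1))" by (simp only: e1)
      finally have "R h - mat 1 - h *\<^sub>R A = h *\<^sub>R (B ** (R h - mat 1))" .
      then show ?thesis using that R0 by simp
    qed
    have "((\<lambda>h. B ** (R h - mat 1)) \<longlongrightarrow> B ** (0::real^'n^'n)) (at 0)"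
      by (rule bounded_bilinear.tendsto[OF mm_bb tendsto_const lim])
    then have "((\<lambda>h. B ** (R h - mat 1)) \<longlongrightarrow> 0) (at 0)" by simp
    then have "((\<lambda>h. norm (B ** (R h - mat 1))) \<longlongrightarrow> 0) (at 0)"
      by (rule tendsto_norm_zero)
    then show "((\<lambda>h. norm (R (0 + h) - R 0 - h *\<^sub>R A) / norm h) \<longlongrightarrow> 0) (at 0)"
    proof (rule Lim_transform_eventually)
      show "\<forall>\<^sub>F h in at 0. norm (B ** (R h - mat 1)) = norm (R (0 + h) - R 0 - h *\<^sub>R A) / norm h"
        unfolding eventually_at_filter
      proof (rule always_eventually, intro allI impI)
        fix h :: real assume "h \<noteq> 0"
        then show "norm (B ** (R h - mat 1)) = norm (R (0 + h) - R 0 - h *\<^sub>R A) / norm h"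
          by (rule eq[symmetric])
      qed
    qed
  qed
  show ?thesis using orth R0 deriv by blast
qed



lemma Y_comm:
  fixes A B :: "real^('n::{finite,linorder})^('n::{finite,linorder})"
  shows "(A ** Jmat d ns k + Jmat d ns k ** B - (1/2) *\<^sub>R (Jmat d ns k ** (B - A) - (B - A) ** Jmat d ns k)) ** Jmat d ns k
       = Jmat d ns k ** (A ** Jmat d ns k + Jmat d ns k ** B - (1/2) *\<^sub>R (Jmat d ns k ** (B - A) - (B - A) ** Jmat d ns k))"
proof -
  have "((A ** Jmat d ns k + Jmat d ns k ** B - (1/2) *\<^sub>R (Jmat d ns k ** (B - A) - (B - A) ** Jmat d ns k)) ** Jmat d ns k) $ i $ j
       = (Jmat d ns k ** (A ** Jmat d ns k + Jmat d ns k ** B - (1/2) *\<^sub>R (Jmat d ns k ** (B - A) - (B - A) ** Jmat d ns k))) $ i $ j" for i j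
    unfolding J_left J_right vector_minus_component vector_add_component vector_scaleR_component J_left J_right
    by (auto simp: algebra_simps)
  then show ?thesis by (simp add: vec_eq_iff)
qed

theorem lemmaA1:
  fixes d :: nat and ns :: "nat \<Rightarrow> nat"
    and V X :: "real \<Rightarrow> real^('n::{finite,linorder})^('n::{finite,linorder})"
    and \<Lambda> :: "real \<Rightarrow> real^('n::{finite,linorder})^('n::{finite,linorder})"
    and c T2 :: "real \<Rightarrow> nat \<Rightarrow> real^('n::{finite,linorder})^('n::{finite,linorder})"
  assumes d1: "1 \<le> d"
    and ns_pos: "0 < ns 1"
    and ns_mono: "\<forall>k\<in>{1..<d}. ns k < ns (k+1)"
    and ns_lt: "ns d < CARD('n)"
    and V_orth: "\<forall>t. orthogonal_matrix (V t)"
    and V_diff: "\<forall>t. V differentiable (at t)"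
    and Lambda_def: "\<forall>t. \<Lambda> t = transpose (V t) ** vector_derivative V (at t)"
    and Lambda_diag: "\<forall>t. \<forall>k\<in>{1..d+1}. blockpart d ns (\<Lambda> t) k k = 0"
    and c_def: "\<forall>t. c t = (\<lambda>k. if k \<in> {1..d} then V t ** Jmat d ns k ** transpose (V t) else 0)"
    and X_skew: "\<forall>t. transpose (X t) = - X t"
    and X_diff: "\<forall>t. X differentiable (at t)"
    and X_diag: "\<forall>t. \<forall>k\<in>{1..d+1}. blockpart d ns (X t) k k = 0"
    and T2_def: "\<forall>t. T2 t = (\<lambda>k. if k \<in> {1..d} then
        V t ** (\<Lambda> t ** X t ** Jmat d ns k + Jmat d ns k ** X t ** \<Lambda> t) ** transpose (V t) else 0)"
  shows "\<forall>t. orth_proj d (tangent_space (flag d ns) (c t)) (T2 t)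
              = (\<lambda>k. if k \<in> {1..d} then V t ** Wmat d ns (X t) (\<Lambda> t) k ** transpose (V t) else 0)
          \<and> (\<forall>k\<in>{1..d}. transpose (Wmat d ns (X t) (\<Lambda> t) k) = Wmat d ns (X t) (\<Lambda> t) k)"
proof
  fix t
  define V0 where "V0 = V t"
  define Vd where "Vd = vector_derivative V (at t)"
  define L where "L = \<Lambda> t"
  define X0 where "X0 = X t"
  define M where "M = X0 ** L - L ** X0"
  define W where "W k = Wmat d ns X0 L k" for k
  have oV: "orthogonal_matrix V0" using V_orth V0_def by simp
  have oV2: "transpose V0 ** V0 = mat 1" "V0 ** transpose V0 = mat 1" using orth_both[OF oV] by auto
  have hV: "(V has_vector_derivative Vd) (at t)" using V_diff vector_derivative_works Vd_def by blast
  have Leq: "L = transpose V0 ** Vd" using Lambda_def L_def V0_def Vd_def by simp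
  have Xsk: "transpose X0 = - X0" using X_skew X0_def by simp
  have Lsk: "transpose L = - L"
  proof -
    have hT: "((\<lambda>s. transpose (V s)) has_vector_derivative transpose Vd) (at t)"
      by (rule bounded_linear.has_vector_derivative[OF tr_bl hV])
    have "((\<lambda>s. transpose (V s) ** V s) has_vector_derivative (transpose (V t) ** Vd + transpose Vd ** V t)) (at t)"
      by (rule bounded_bilinear.has_vector_derivative[OF mm_bb hT hV])
    moreover have "(\<lambda>s. transpose (V s) ** V s) = (\<lambda>s. mat 1)" using V_orth orthogonal_matrix by auto
    ultimately have "((\<lambda>s. mat 1) has_vector_derivative (transpose V0 ** Vd + transpose Vd ** V0)) (at t)"
      using V0_def by simp
    then have "transpose V0 ** Vd + transpose Vd ** V0 = 0"
      by (metis vector_derivative_unique_at has_vector_derivative_const)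
    then show ?thesis using Leq by (simp add: matrix_transpose_mul eq_neg_iff_add_eq_0 add.commute)
  qed
  have Msk: "transpose M = - M" using Xsk Lsk by (simp add: M_def malg)
  have Wk: "W k = (1/2) *\<^sub>R (Jmat d ns k ** M - M ** Jmat d ns k)" for k
    unfolding W_def M_def by (rule Wmat_alg[OF Xsk Lsk])
  define Om where "Om = - (1/2) *\<^sub>R M"
  have Omsk: "transpose Om = - Om" using Msk by (simp add: Om_def transpose_scalar tr_neg)
  obtain R where R: "\<forall>s. orthogonal_matrix (R s)" "R 0 = mat 1" "(R has_vector_derivative Om) (at 0)"
    using cayley[OF Omsk] by blast
  define P where "P = (\<lambda>k. if k \<in> {1..d} then V0 ** W k ** transpose V0 else 0)"
  have ct: "c t = (\<lambda>k. if k \<in> {1..d} then V0 ** Jmat d ns k ** transpose V0 else 0)"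
    unfolding V0_def using c_def by simp
  have ctflag: "c t \<in> flag d ns" unfolding flag_def ct using oV by blast
  have Pin: "P \<in> tangent_space (flag d ns) (c t)"
    unfolding tangent_space_def
  proof (intro CollectI exI conjI allI)
    let ?g = "\<lambda>s k. if k \<in> {1..d} then (V0 ** R s) ** Jmat d ns k ** transpose (V0 ** R s) else 0"
    fix s
    show "?g s \<in> flag d ns" unfolding flag_def
      using orthogonal_matrix_mul[OF oV R(1)[rule_format, of s]] by blast
  next
    let ?g = "\<lambda>s k. if k \<in> {1..d} then (V0 ** R s) ** Jmat d ns k ** transpose (V0 ** R s) else 0"
    show "?g 0 = c t" unfolding R(2) ct by (simp add: fun_eq_iff)
  next
    fix k
    let ?g = "\<lambda>s k. if k \<in> {1..d} then (V0 ** R s) ** Jmat d ns k ** transpose (V0 ** R s) else 0"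
    show "((\<lambda>s. ?g s k) has_vector_derivative P k) (at 0)"
    proof (cases "k \<in> {1..d}")
      case False
      have eq: "(\<lambda>s. ?g s k) = (\<lambda>s. 0)" using False by auto
      have Pk0: "P k = 0" using False unfolding P_def by auto
      show ?thesis unfolding eq Pk0 by (rule has_vector_derivative_const)
    next
      case True
      let ?J = "Jmat d ns k"
      have dU: "((\<lambda>s. V0 ** R s) has_vector_derivative V0 ** Om) (at 0)"
        using bounded_bilinear.has_vector_derivative[OF mm_bb has_vector_derivative_const R(3), of V0]
        by simp
      have dUJ: "((\<lambda>s. V0 ** R s ** ?J) has_vector_derivative V0 ** Om ** ?J) (at 0)"
        using bounded_bilinear.has_vector_derivative[OF mm_bb dU has_vector_derivative_const, of ?J]
        by simp
      have dUt: "((\<lambda>s. transpose (V0 ** R s)) has_vector_derivative transpose (V0 ** Om)) (at 0)"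
        by (rule bounded_linear.has_vector_derivative[OF tr_bl dU])
      have dF: "((\<lambda>s. V0 ** R s ** ?J ** transpose (V0 ** R s)) has_vector_derivative
          (V0 ** R 0 ** ?J ** transpose (V0 ** Om) + V0 ** Om ** ?J ** transpose (V0 ** R 0))) (at 0)"
        by (rule bounded_bilinear.has_vector_derivative[OF mm_bb dUJ dUt])
      have "V0 ** R 0 ** ?J ** transpose (V0 ** Om) + V0 ** Om ** ?J ** transpose (V0 ** R 0)
           = V0 ** W k ** transpose V0"
        using R(2) Msk by (simp add: Wk Om_def malg algebra_simps)
      then show ?thesis using dF True by (simp add: P_def)
    qed
  qed
  have Porth: "\<forall>s\<in>tangent_space (flag d ns) (c t). tinner d (\<lambda>k. T2 t k - P k) s = 0"
  proof
    fix D assume D: "D \<in> tangent_space (flag d ns) (c t)"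
    have "inner (T2 t k - P k) (D k) = 0" if k: "k \<in> {1..d}" for k
    proof (rule inner_anticomm)
      let ?J = "Jmat d ns k"
      let ?C = "V0 ** ?J ** transpose V0"
      have Ck: "c t k = ?C" using ct k by simp
      define Y where "Y = L ** X0 ** ?J + ?J ** (X0 ** L) - W k"
      have E: "T2 t k - P k = V0 ** Y ** transpose V0"
        using T2_def k by (simp add: P_def Y_def V0_def L_def X0_def malg)
      have YJ: "Y ** ?J = ?J ** Y"
        using Y_comm[of "L ** X0" d ns k "X0 ** L"] by (simp add: Y_def Wk M_def matrix_mul_assoc)
      show "(T2 t k - P k) ** c t k = c t k ** (T2 t k - P k)"
      proof -
        have "V0 ** Y ** transpose V0 ** (V0 ** ?J ** transpose V0) = V0 ** (Y ** ?J) ** transpose V0"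
          by (simp add: matrix_mul_assoc) (metis matrix_mul_assoc matrix_mul_rid oV2(1))
        also have "\<dots> = V0 ** (?J ** Y) ** transpose V0" by (simp add: YJ)
        also have "\<dots> = V0 ** ?J ** transpose V0 ** (V0 ** Y ** transpose V0)"
          by (simp add: matrix_mul_assoc) (metis matrix_mul_assoc matrix_mul_rid oV2(1))
        finally show ?thesis using E Ck by simp
      qed
      show "c t k ** D k = - (D k ** c t k)" by (rule tangent_anti[OF D k])
      show "c t k ** c t k = mat 1" by (rule flag_sq[OF ctflag k])
      show "transpose (c t k) = c t k" using Ck by (simp add: matrix_transpose_mul J_tr matrix_mul_assoc)
    qed
    then show "tinner d (\<lambda>k. T2 t k - P k) D = 0" by (simp add: tinner_def)
  qed
  have Z: "\<forall>T\<in>tangent_space (flag d ns) (c t). \<forall>k. k \<notin> {1..d} \<longrightarrow> T k = 0"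
    using tangent_zero by blast
  have "orth_proj d (tangent_space (flag d ns) (c t)) (T2 t) = P"
    by (rule orth_unique[OF Pin Porth Z])
  moreover have "transpose (W k) = W k" for k
    using Msk by (simp add: Wk transpose_scalar malg J_tr algebra_simps)
  ultimately show "orth_proj d (tangent_space (flag d ns) (c t)) (T2 t)
              = (\<lambda>k. if k \<in> {1..d} then V t ** Wmat d ns (X t) (\<Lambda> t) k ** transpose (V t) else 0)
          \<and> (\<forall>k\<in>{1..d}. transpose (Wmat d ns (X t) (\<Lambda> t) k) = Wmat d ns (X t) (\<Lambda> t) k)"
    unfolding P_def W_def V0_def X0_def L_def by simp
qed


end
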